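(* Let $G=(V_1,E_1)$ and $H=(V_2,E_2)$ be digraphs. If both $G$ and $H$ satisfy one of the following properties, then so do $G\mathbin{\dot\cup}H$ and $G\mathbin{\overline{\cup}}H$: (1) congruence $n$-permutability for some $n$; (2) congruence modularity; (3) the Hobby–McKenzie property.
   Context: Digraphs are finite and loopless. $G\mathbin{\dot\cup}H$ is the disjoint union digraph; $G\mathbin{\overline{\cup}}H$ is the same structure with two additional unary relations interpreted as $V_1$ and $V_2$. Polymorphisms of a structure are maps from tuples to elements preserving every relation coordinatewise; a structure has a property if it has polymorphisms satisfying the indicated equations for all values of the variables. Congruence $n$-permutable: ternary polymorphisms $p_0,\dots,p_n$ with $p_0(x,y,z)=x$, $p_i(x,x,y)=p_{i+1}(x,y,y)$ for $i<n$, $p_n(x,y,z)=z$. Congruence modular: ternary polymorphisms $s_0,\dots,s_{2n},p$ with $s_0(x,y,z)=x$, $s_i(x,y,x)=x$, $s_i(x,y,y)=s_{i+1}(x,y,y)$ for even $i<2n$, $s_i(x,x,y)=s_{i+1}(x,x,y)$ for odd $i<2n$, $s_{2n}(x,y,y)=p(x,y,y)$, $p(x,x,y)=y$. Hobby–McKenzie: there are $n\ge0$ and idempotent ternary polymorphisms $d_0,\dots,d_n,p,e_0,\dots,e_n$ with $x=d_0(x,y,z)$, $e_n(x,y,z)=z$; $d_i(x,y,y)=d_{i+1}(x,y,y)$ and $e_i(x,y,y)=e_{i+1}(x,y,y)$ for even $i<n$; $d_i(x,x,y)=d_{i+1}(x,x,y)$ and $e_i(x,x,y)=e_{i+1}(x,x,y)$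 for odd $i<n$; $d_n(x,y,y)=p(x,y,y)$ and $p(x,x,y)=e_0(x,x,y)$; $d_i(x,y,x)=d_{i+1}(x,y,x)$ for odd $i<n$ and $e_j(x,y,x)=e_{j+1}(x,y,x)$ for even $j<n$. *)

theory Defs
  imports Main
begin

record 'v rstruct =
  carrier :: "'v set"
  edges :: "('v \<times> 'v) set"
  unaries :: "'v set set"

definition digraph :: "'v set \<Rightarrow> ('v \<times> 'v) set \<Rightarrow> bool" where
  "digraph V E \<longleftrightarrow> finite V \<and> E \<subseteq> V \<times> V \<and> (\<forall>v. (v, v) \<notin> E)"

definition dg :: "'v set \<Rightarrow> ('v \<times> 'v) set \<Rightarrow> 'v rstruct" where
  "dg V E = \<lparr>carrier = V, edges = E, unaries = {}\<rparr>"

definition dunion :: "'a set \<Rightarrow> ('a \<times> 'a) set \<Rightarrow> 'b set \<Rightarrow> ('b \<times> 'b) set \<Rightarrow> ('a + 'b) rstruct" where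
  "dunion V1 E1 V2 E2 = \<lparr>carrier = Inl ` V1 \<union> Inr ` V2,
     edges = map_prod Inl Inl ` E1 \<union> map_prod Inr Inr ` E2, unaries = {}\<rparr>"

definition dunion_marked :: "'a set \<Rightarrow> ('a \<times> 'a) set \<Rightarrow> 'b set \<Rightarrow> ('b \<times> 'b) set \<Rightarrow> ('a + 'b) rstruct" where
  "dunion_marked V1 E1 V2 E2 = \<lparr>carrier = Inl ` V1 \<union> Inr ` V2,
     edges = map_prod Inl Inl ` E1 \<union> map_prod Inr Inr ` E2, unaries = {Inl ` V1, Inr ` V2}\<rparr>"

definition tpol :: "('v, 'm) rstruct_scheme \<Rightarrow> ('v \<Rightarrow> 'v \<Rightarrow> 'v \<Rightarrow> 'v) \<Rightarrow> bool" where
  "tpol S f \<longleftrightarrow>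
     (\<forall>x\<in>carrier S. \<forall>y\<in>carrier S. \<forall>z\<in>carrier S. f x y z \<in> carrier S) \<and>
     (\<forall>x1 y1 x2 y2 x3 y3. (x1, y1) \<in> edges S \<longrightarrow> (x2, y2) \<in> edges S \<longrightarrow> (x3, y3) \<in> edges S
        \<longrightarrow> (f x1 x2 x3, f y1 y2 y3) \<in> edges S) \<and>
     (\<forall>U\<in>unaries S. \<forall>x\<in>U. \<forall>y\<in>U. \<forall>z\<in>U. f x y z \<in> U)"

definition n_permutable :: "nat \<Rightarrow> ('v, 'm) rstruct_scheme \<Rightarrow> bool" where
  "n_permutable n S \<longleftrightarrow> (\<exists>p :: nat \<Rightarrow> 'v \<Rightarrow> 'v \<Rightarrow> 'v \<Rightarrow> 'v.
     (\<forall>i\<le>n. tpol S (p i)) \<and>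
     (\<forall>x\<in>carrier S. \<forall>y\<in>carrier S. \<forall>z\<in>carrier S.
        p 0 x y z = x \<and> (\<forall>i<n. p i x x y = p (Suc i) x y y) \<and> p n x y z = z))"

definition cong_permutable :: "('v, 'm) rstruct_scheme \<Rightarrow> bool" where
  "cong_permutable S \<longleftrightarrow> (\<exists>n. n_permutable n S)"

definition cong_modular :: "('v, 'm) rstruct_scheme \<Rightarrow> bool" where
  "cong_modular S \<longleftrightarrow> (\<exists>n (s :: nat \<Rightarrow> 'v \<Rightarrow> 'v \<Rightarrow> 'v \<Rightarrow> 'v) p.
     (\<forall>i\<le>2*n. tpol S (s i)) \<and> tpol S p \<and>
     (\<forall>x\<in>carrier S. \<forall>y\<in>carrier S. \<forall>z\<in>carrier S.
        s 0 x y z = x \<and>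
        (\<forall>i\<le>2*n. s i x y x = x) \<and>
        (\<forall>i<2*n. even i \<longrightarrow> s i x y y = s (Suc i) x y y) \<and>
        (\<forall>i<2*n. odd i \<longrightarrow> s i x x y = s (Suc i) x x y) \<and>
        s (2*n) x y y = p x y y \<and>
        p x x y = y))"

definition hobby_mckenzie :: "('v, 'm) rstruct_scheme \<Rightarrow> bool" where
  "hobby_mckenzie S \<longleftrightarrow> (\<exists>n (d :: nat \<Rightarrow> 'v \<Rightarrow> 'v \<Rightarrow> 'v \<Rightarrow> 'v) p e.
     (\<forall>i\<le>n. tpol S (d i) \<and> tpol S (e i)) \<and> tpol S p \<and>
     (\<forall>x\<in>carrier S. (\<forall>i\<le>n. d i x x x = x \<and> e i x x x = x) \<and> p x x x = x) \<and>
     (\<forall>x\<in>carrier S. \<forall>y\<in>carrier S. \<forall>z\<in>carrier S.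
        d 0 x y z = x \<and> e n x y z = z \<and>
        (\<forall>i<n. even i \<longrightarrow> d i x y y = d (Suc i) x y y \<and> e i x y y = e (Suc i) x y y) \<and>
        (\<forall>i<n. odd i \<longrightarrow> d i x x y = d (Suc i) x x y \<and> e i x x y = e (Suc i) x x y) \<and>
        d n x y y = p x y y \<and> p x x y = e 0 x x y \<and>
        (\<forall>i<n. odd i \<longrightarrow> d i x y x = d (Suc i) x y x) \<and>
        (\<forall>j<n. even j \<longrightarrow> e j x y x = e (Suc j) x y x)))"

end

theory Submission
  imports Defs
begin

definition sel :: "(bool \<Rightarrow> bool \<Rightarrow> bool \<Rightarrow> nat) \<Rightarrow> 'c + 'd \<Rightarrow> 'c + 'd \<Rightarrow> 'c + 'd \<Rightarrow> 'c + 'd" where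
  "sel k x y z = (case k (isl x) (isl y) (isl z) of 0 \<Rightarrow> x | Suc 0 \<Rightarrow> y | _ \<Rightarrow> z)"

definition comb :: "('c \<Rightarrow> 'c \<Rightarrow> 'c \<Rightarrow> 'c) \<Rightarrow> ('d \<Rightarrow> 'd \<Rightarrow> 'd \<Rightarrow> 'd) \<Rightarrow> (bool \<Rightarrow> bool \<Rightarrow> bool \<Rightarrow> nat)
   \<Rightarrow> 'c + 'd \<Rightarrow> 'c + 'd \<Rightarrow> 'c + 'd \<Rightarrow> 'c + 'd" where
  "comb f g k x y z = (case (x, y, z) of (Inl a, Inl b, Inl c) \<Rightarrow> Inl (f a b c)
     | (Inr a, Inr b, Inr c) \<Rightarrow> Inr (g a b c) | _ \<Rightarrow> sel k x y z)"

lemma comb_LLL[simp]: "comb f g k (Inl a) (Inl b) (Inl c) = Inl (f a b c)"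
  by (simp add: comb_def)
lemma comb_RRR[simp]: "comb f g k (Inr a) (Inr b) (Inr c) = Inr (g a b c)"
  by (simp add: comb_def)
lemma comb_mixed: "\<not> (isl x = isl y \<and> isl y = isl z) \<Longrightarrow> comb f g k x y z = sel k x y z"
  by (cases x; cases y; cases z) (auto simp: comb_def)

lemma sel_in: "sel k x y z \<in> {x, y, z}"
  by (auto simp: sel_def split: nat.split)

lemma edgeL: "(x,y) \<in> map_prod Inl Inl ` E1 \<union> map_prod Inr Inr ` E2 \<Longrightarrow> isl x \<Longrightarrow>
   \<exists>a b. x = Inl a \<and> y = Inl b \<and> (a,b) \<in> E1"
  by auto
lemma edgeR: "(x,y) \<in> map_prod Inl Inl ` E1 \<union> map_prod Inr Inr ` E2 \<Longrightarrow> \<not> isl x \<Longrightarrow>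
   \<exists>a b. x = Inr a \<and> y = Inr b \<and> (a,b) \<in> E2"
  by auto

lemma tpol_comb:
  assumes f: "tpol (dg V1 E1) f" and g: "tpol (dg V2 E2) g"
  shows "tpol (dunion V1 E1 V2 E2) (comb f g k) \<and> tpol (dunion_marked V1 E1 V2 E2) (comb f g k)"
proof -
  have fc: "\<And>a b c. a \<in> V1 \<Longrightarrow> b \<in> V1 \<Longrightarrow> c \<in> V1 \<Longrightarrow> f a b c \<in> V1"
    and fe: "\<And>a1 b1 a2 b2 a3 b3. (a1,b1) \<in> E1 \<Longrightarrow> (a2,b2) \<in> E1 \<Longrightarrow> (a3,b3) \<in> E1 \<Longrightarrow> (f a1 a2 a3, f b1 b2 b3) \<in> E1"
    using f by (auto simp: tpol_def dg_def)
  have gc: "\<And>a b c. a \<in> V2 \<Longrightarrow> b \<in> V2 \<Longrightarrow> c \<in> V2 \<Longrightarrow> g a b c \<in> V2"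
    and ge: "\<And>a1 b1 a2 b2 a3 b3. (a1,b1) \<in> E2 \<Longrightarrow> (a2,b2) \<in> E2 \<Longrightarrow> (a3,b3) \<in> E2 \<Longrightarrow> (g a1 a2 a3, g b1 b2 b3) \<in> E2"
    using g by (auto simp: tpol_def dg_def)
  let ?C = "Inl ` V1 \<union> Inr ` V2"
  let ?E = "map_prod Inl Inl ` E1 \<union> map_prod Inr Inr ` E2"
  have car: "comb f g k x y z \<in> ?C" if "x \<in> ?C" "y \<in> ?C" "z \<in> ?C" for x y z
  proof (cases "isl x = isl y \<and> isl y = isl z")
    case True
    then show ?thesis using that fc gc by (cases x; cases y; cases z) auto
  next
    case False
    then show ?thesis using that sel_in[of k x y z] comb_mixed[OF False] by auto
  qed
  have edg: "(comb f g k x1 x2 x3, comb f g k y1 y2 y3) \<in> ?E"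
    if h: "(x1,y1) \<in> ?E" "(x2,y2) \<in> ?E" "(x3,y3) \<in> ?E" for x1 x2 x3 y1 y2 y3
  proof -
    have i: "isl x1 = isl y1" "isl x2 = isl y2" "isl x3 = isl y3" using that by auto
    show ?thesis
    proof (cases "isl x1 = isl x2 \<and> isl x2 = isl x3")
      case True
      show ?thesis
      proof (cases "isl x1")
        case True
        then have "isl x2" "isl x3" using \<open>isl x1 = isl x2 \<and> isl x2 = isl x3\<close> by auto
        then obtain a1 b1 a2 b2 a3 b3 where "x1 = Inl a1" "y1 = Inl b1" "(a1,b1) \<in> E1"
          "x2 = Inl a2" "y2 = Inl b2" "(a2,b2) \<in> E1" "x3 = Inl a3" "y3 = Inl b3" "(a3,b3) \<in> E1"
          using edgeL[OF h(1) True] edgeL[OF h(2) \<open>isl x2\<close>] edgeL[OF h(3) \<open>isl x3\<close>] by metis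
        then show ?thesis using fe by auto
      next
        case False
        then have "\<not> isl x2" "\<not> isl x3" using \<open>isl x1 = isl x2 \<and> isl x2 = isl x3\<close> by auto
        then obtain a1 b1 a2 b2 a3 b3 where "x1 = Inr a1" "y1 = Inr b1" "(a1,b1) \<in> E2"
          "x2 = Inr a2" "y2 = Inr b2" "(a2,b2) \<in> E2" "x3 = Inr a3" "y3 = Inr b3" "(a3,b3) \<in> E2"
          using edgeR[OF h(1) False] edgeR[OF h(2) \<open>\<not> isl x2\<close>] edgeR[OF h(3) \<open>\<not> isl x3\<close>] by metis
        then show ?thesis using ge by auto
      qed
    next
      case False
      then have F2: "\<not> (isl y1 = isl y2 \<and> isl y2 = isl y3)" using i by simp
      have "sel k x1 x2 x3 = x1 \<and> sel k y1 y2 y3 = y1 \<or> sel k x1 x2 x3 = x2 \<and> sel k y1 y2 y3 = y2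
          \<or> sel k x1 x2 x3 = x3 \<and> sel k y1 y2 y3 = y3"
        by (auto simp: sel_def i split: nat.split)
      then show ?thesis using that comb_mixed[OF False] comb_mixed[OF F2] by auto
    qed
  qed
  have un1: "comb f g k x y z \<in> Inl ` V1" if "x \<in> Inl ` V1" "y \<in> Inl ` V1" "z \<in> Inl ` V1" for x y z
    using that fc by auto
  have un2: "comb f g k x y z \<in> Inr ` V2" if "x \<in> Inr ` V2" "y \<in> Inr ` V2" "z \<in> Inr ` V2" for x y z
    using that gc by auto
  show ?thesis
    unfolding tpol_def dunion_def dunion_marked_def
    using car edg un1 un2 by simp
qed

lemma tpol_proj3: "tpol (dg V E) (\<lambda>x y z. z)"
  by (simp add: tpol_def dg_def)

lemma carrier_du[simp]: "carrier (dunion V1 E1 V2 E2) = Inl ` V1 \<union> Inr ` V2"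
  "carrier (dunion_marked V1 E1 V2 E2) = Inl ` V1 \<union> Inr ` V2"
  "carrier (dg V E) = V"
  by (simp_all add: dunion_def dunion_marked_def dg_def)



lemma perm_union:
  assumes A: "n_permutable n1 (dg V1 E1)" and B: "n_permutable n2 (dg V2 E2)"
  shows "n_permutable (max n1 n2 + 2) (dunion V1 E1 V2 E2) \<and> n_permutable (max n1 n2 + 2) (dunion_marked V1 E1 V2 E2)"
proof -
  obtain p1 where p1t: "\<forall>i\<le>n1. tpol (dg V1 E1) (p1 i)" and
    p1e: "\<forall>x\<in>V1. \<forall>y\<in>V1. \<forall>z\<in>V1. p1 0 x y z = x \<and> (\<forall>i<n1. p1 i x x y = p1 (Suc i) x y y) \<and> p1 n1 x y z = z"
    using A unfolding n_permutable_def by auto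
  obtain p2 where p2t: "\<forall>i\<le>n2. tpol (dg V2 E2) (p2 i)" and
    p2e: "\<forall>x\<in>V2. \<forall>y\<in>V2. \<forall>z\<in>V2. p2 0 x y z = x \<and> (\<forall>i<n2. p2 i x x y = p2 (Suc i) x y y) \<and> p2 n2 x y z = z"
    using B unfolding n_permutable_def by auto
  define P1 where "P1 i = (if i \<le> n1 then p1 i else (\<lambda>x y z. z))" for i
  define P2 where "P2 i = (if i \<le> n2 then p2 i else (\<lambda>x y z. z))" for i
  define N where "N = max n1 n2 + 2"
  define K :: "nat \<Rightarrow> bool \<Rightarrow> bool \<Rightarrow> bool \<Rightarrow> nat" where "K i = (if i = 0 then (\<lambda>_ _ _. 0) else if i = 1 then (\<lambda>a b c. if b = c then 0 else 2) else (\<lambda>_ _ _. 2))" for i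
  define q where "q i = comb (P1 i) (P2 i) (K i)" for i
  have t1: "tpol (dg V1 E1) (P1 i)" for i using p1t by (cases "i \<le> n1") (auto simp: P1_def tpol_def dg_def)
  have t2: "tpol (dg V2 E2) (P2 i)" for i using p2t by (cases "i \<le> n2") (auto simp: P2_def tpol_def dg_def)
  have P1a: "P1 0 a b c = a" "P1 i a a b = P1 (Suc i) a b b" "n1 < j \<Longrightarrow> P1 j a b c = c"
    if "a \<in> V1" "b \<in> V1" "c \<in> V1" for a b c i j
    using p1e that by (auto simp: P1_def not_less_eq_eq le_Suc_eq)
  have P2a: "P2 0 a b c = a" "P2 i a a b = P2 (Suc i) a b b" "n2 < j \<Longrightarrow> P2 j a b c = c"
    if "a \<in> V2" "b \<in> V2" "c \<in> V2" for a b c i j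
    using p2e that by (auto simp: P2_def not_less_eq_eq le_Suc_eq)
  have eqs: "q 0 x y z = x \<and> (\<forall>i<N. q i x x y = q (Suc i) x y y) \<and> q N x y z = z"
    if "x \<in> Inl ` V1 \<union> Inr ` V2" "y \<in> Inl ` V1 \<union> Inr ` V2" "z \<in> Inl ` V1 \<union> Inr ` V2" for x y z
  proof -
    have N1: "n1 < N" "n2 < N" "2 \<le> N" by (auto simp: N_def)
    have N2: "N \<noteq> 0" "N \<noteq> Suc 0" "0 < N" using N1 by auto
    show ?thesis using that
      apply (elim UnE imageE)
      apply (simp_all add: q_def P1a P2a N1 comb_mixed sel_def K_def)
      apply (auto simp: P1a P2a N1 N2)
      done
  qed
  show ?thesis
    unfolding n_permutable_def N_def[symmetric]
    using tpol_comb[OF t1 t2] eqs unfolding q_def by (intro conjI exI[of _ q]; simp add: q_def)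
qed


lemma mod_union:
  assumes A: "cong_modular (dg V1 E1)" and B: "cong_modular (dg V2 E2)"
  shows "cong_modular (dunion V1 E1 V2 E2) \<and> cong_modular (dunion_marked V1 E1 V2 E2)"
proof -
  obtain n1 s1 p1 where s1t: "\<forall>i\<le>2*n1. tpol (dg V1 E1) (s1 i)" and p1t: "tpol (dg V1 E1) p1" and
    e1: "\<forall>x\<in>V1. \<forall>y\<in>V1. \<forall>z\<in>V1.
        s1 0 x y z = x \<and>
        (\<forall>i\<le>2*n1. s1 i x y x = x) \<and>
        (\<forall>i<2*n1. even i \<longrightarrow> s1 i x y y = s1 (Suc i) x y y) \<and>
        (\<forall>i<2*n1. odd i \<longrightarrow> s1 i x x y = s1 (Suc i) x x y) \<and>
        s1 (2*n1) x y y = p1 x y y \<and>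
        p1 x x y = y"
    using A unfolding cong_modular_def carrier_du by (elim exE conjE) (rule that)
  obtain n2 s2 p2 where s2t: "\<forall>i\<le>2*n2. tpol (dg V2 E2) (s2 i)" and p2t: "tpol (dg V2 E2) p2" and
    e2: "\<forall>x\<in>V2. \<forall>y\<in>V2. \<forall>z\<in>V2.
        s2 0 x y z = x \<and>
        (\<forall>i\<le>2*n2. s2 i x y x = x) \<and>
        (\<forall>i<2*n2. even i \<longrightarrow> s2 i x y y = s2 (Suc i) x y y) \<and>
        (\<forall>i<2*n2. odd i \<longrightarrow> s2 i x x y = s2 (Suc i) x x y) \<and>
        s2 (2*n2) x y y = p2 x y y \<and>
        p2 x x y = y"
    using B unfolding cong_modular_def carrier_du by (elim exE conjE) (rule that)
  define S1 where "S1 i = s1 (min i (2*n1))" for i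
  define S2 where "S2 i = s2 (min i (2*n2))" for i
  define N where "N = max n1 n2"
  define mu :: "bool \<Rightarrow> bool \<Rightarrow> bool \<Rightarrow> nat" where "mu = (\<lambda>a b c. if b = c then 0 else 2)"
  define z0 :: "bool \<Rightarrow> bool \<Rightarrow> bool \<Rightarrow> nat" where "z0 = (\<lambda>a b c. 0)"
  define s where "s i = comb (S1 i) (S2 i) z0" for i
  define p where "p = comb p1 p2 mu"
  have t1: "tpol (dg V1 E1) (S1 i)" for i using s1t by (simp add: S1_def)
  have t2: "tpol (dg V2 E2) (S2 i)" for i using s2t by (simp add: S2_def)
  have F1: "S1 0 a b c = a" "S1 i a b a = a" "even i \<Longrightarrow> S1 i a b b = S1 (Suc i) a b b"
    "odd i \<Longrightarrow> S1 i a a b = S1 (Suc i) a a b" "S1 (2*N) a b b = p1 a b b" "p1 a a b = b" "S1 (Suc (2*N)) a b b = p1 a b b"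
    if "a \<in> V1" "b \<in> V1" "c \<in> V1" for a b c i
  proof -
    have E: "s1 0 a b c = a" "\<forall>i\<le>2*n1. s1 i a b a = a"
      "\<forall>i<2*n1. even i \<longrightarrow> s1 i a b b = s1 (Suc i) a b b"
      "\<forall>i<2*n1. odd i \<longrightarrow> s1 i a a b = s1 (Suc i) a a b"
      "s1 (2*n1) a b b = p1 a b b" "p1 a a b = b"
      using e1 that by blast+
    show "S1 0 a b c = a" using E(1) by (simp add: S1_def)
    show "S1 i a b a = a" using E(2) by (simp add: S1_def)
    show "S1 (2*N) a b b = p1 a b b" "S1 (Suc (2*N)) a b b = p1 a b b"
      using E(5) by (simp_all add: S1_def N_def min_absorb2)
    show "p1 a a b = b" by (rule E(6))
    show "S1 i a b b = S1 (Suc i) a b b" if "even i"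
    proof (cases "i < 2*n1")
      case True
      then have "s1 i a b b = s1 (Suc i) a b b" using E(3) that by blast
      then show ?thesis using True by (simp add: S1_def min_def)
    next
      case False
      then show ?thesis by (simp add: S1_def min_def)
    qed
    show "S1 i a a b = S1 (Suc i) a a b" if "odd i"
    proof (cases "i < 2*n1")
      case True
      then have "s1 i a a b = s1 (Suc i) a a b" using E(4) that by blast
      then show ?thesis using True by (simp add: S1_def min_def)
    next
      case False
      then show ?thesis by (simp add: S1_def min_def)
    qed
  qed
  have F2: "S2 0 a b c = a" "S2 i a b a = a" "even i \<Longrightarrow> S2 i a b b = S2 (Suc i) a b b"
    "odd i \<Longrightarrow> S2 i a a b = S2 (Suc i) a a b" "S2 (2*N) a b b = p2 a b b" "p2 a a b = b" "S2 (Suc (2*N)) a b b = p2 a b b"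
    if "a \<in> V2" "b \<in> V2" "c \<in> V2" for a b c i
  proof -
    have E: "s2 0 a b c = a" "\<forall>i\<le>2*n2. s2 i a b a = a"
      "\<forall>i<2*n2. even i \<longrightarrow> s2 i a b b = s2 (Suc i) a b b"
      "\<forall>i<2*n2. odd i \<longrightarrow> s2 i a a b = s2 (Suc i) a a b"
      "s2 (2*n2) a b b = p2 a b b" "p2 a a b = b"
      using e2 that by blast+
    show "S2 0 a b c = a" using E(1) by (simp add: S2_def)
    show "S2 i a b a = a" using E(2) by (simp add: S2_def)
    show "S2 (2*N) a b b = p2 a b b" "S2 (Suc (2*N)) a b b = p2 a b b"
      using E(5) by (simp_all add: S2_def N_def min_absorb2)
    show "p2 a a b = b" by (rule E(6))
    show "S2 i a b b = S2 (Suc i) a b b" if "even i"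
    proof (cases "i < 2*n2")
      case True
      then have "s2 i a b b = s2 (Suc i) a b b" using E(3) that by blast
      then show ?thesis using True by (simp add: S2_def min_def)
    next
      case False
      then show ?thesis by (simp add: S2_def min_def)
    qed
    show "S2 i a a b = S2 (Suc i) a a b" if "odd i"
    proof (cases "i < 2*n2")
      case True
      then have "s2 i a a b = s2 (Suc i) a a b" using E(4) that by blast
      then show ?thesis using True by (simp add: S2_def min_def)
    next
      case False
      then show ?thesis by (simp add: S2_def min_def)
    qed
  qed
  have eqs: "s 0 x y z = x \<and>
        (\<forall>i\<le>2*N. s i x y x = x) \<and>
        (\<forall>i<2*N. even i \<longrightarrow> s i x y y = s (Suc i) x y y) \<and>
        (\<forall>i<2*N. odd i \<longrightarrow> s i x x y = s (Suc i) x x y) \<and>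
        s (2*N) x y y = p x y y \<and>
        p x x y = y"
    if "x \<in> Inl ` V1 \<union> Inr ` V2" "y \<in> Inl ` V1 \<union> Inr ` V2" "z \<in> Inl ` V1 \<union> Inr ` V2" for x y z
    using that
    apply (elim UnE imageE)
    apply (simp_all add: s_def p_def F1(1,2,5,6,7) F2(1,2,5,6,7) comb_mixed sel_def mu_def z0_def)
    apply (auto intro: F1(3,4) F2(3,4))
    done
  show ?thesis
    unfolding cong_modular_def
    using tpol_comb[OF t1 t2] tpol_comb[OF p1t p2t] eqs unfolding s_def p_def
    by (intro conjI exI[of _ N] exI[of _ s] exI[of _ p]; simp add: s_def p_def)
qed

lemma hm_union:
  assumes A: "hobby_mckenzie (dg V1 E1)" and B: "hobby_mckenzie (dg V2 E2)"
  shows "hobby_mckenzie (dunion V1 E1 V2 E2) \<and> hobby_mckenzie (dunion_marked V1 E1 V2 E2)"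
proof -
  obtain n1 d1 p1 e1 where t1': "\<forall>i\<le>n1. tpol (dg V1 E1) (d1 i) \<and> tpol (dg V1 E1) (e1 i)"
    and p1t: "tpol (dg V1 E1) p1"
    and id1: "\<forall>x\<in>V1. (\<forall>i\<le>n1. d1 i x x x = x \<and> e1 i x x x = x) \<and> p1 x x x = x"
    and q1: "\<forall>x\<in>V1. \<forall>y\<in>V1. \<forall>z\<in>V1.
        d1 0 x y z = x \<and> e1 n1 x y z = z \<and>
        (\<forall>i<n1. even i \<longrightarrow> d1 i x y y = d1 (Suc i) x y y \<and> e1 i x y y = e1 (Suc i) x y y) \<and>
        (\<forall>i<n1. odd i \<longrightarrow> d1 i x x y = d1 (Suc i) x x y \<and> e1 i x x y = e1 (Suc i) x x y) \<and>
        d1 n1 x y y = p1 x y y \<and> p1 x x y = e1 0 x x y \<and>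
        (\<forall>i<n1. odd i \<longrightarrow> d1 i x y x = d1 (Suc i) x y x) \<and>
        (\<forall>j<n1. even j \<longrightarrow> e1 j x y x = e1 (Suc j) x y x)"
    using A unfolding hobby_mckenzie_def carrier_du by (elim exE conjE) (rule that)
  obtain n2 d2 p2 e2 where t2': "\<forall>i\<le>n2. tpol (dg V2 E2) (d2 i) \<and> tpol (dg V2 E2) (e2 i)"
    and p2t: "tpol (dg V2 E2) p2"
    and id2: "\<forall>x\<in>V2. (\<forall>i\<le>n2. d2 i x x x = x \<and> e2 i x x x = x) \<and> p2 x x x = x"
    and q2: "\<forall>x\<in>V2. \<forall>y\<in>V2. \<forall>z\<in>V2.
        d2 0 x y z = x \<and> e2 n2 x y z = z \<and>
        (\<forall>i<n2. even i \<longrightarrow> d2 i x y y = d2 (Suc i) x y y \<and> e2 i x y y = e2 (Suc i) x y y) \<and>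
        (\<forall>i<n2. odd i \<longrightarrow> d2 i x x y = d2 (Suc i) x x y \<and> e2 i x x y = e2 (Suc i) x x y) \<and>
        d2 n2 x y y = p2 x y y \<and> p2 x x y = e2 0 x x y \<and>
        (\<forall>i<n2. odd i \<longrightarrow> d2 i x y x = d2 (Suc i) x y x) \<and>
        (\<forall>j<n2. even j \<longrightarrow> e2 j x y x = e2 (Suc j) x y x)"
    using B unfolding hobby_mckenzie_def carrier_du by (elim exE conjE) (rule that)
  define D1 where "D1 i = d1 (min i n1)" for i
  define D2 where "D2 i = d2 (min i n2)" for i
  define G1 where "G1 i = (if i \<le> n1 then e1 i else (\<lambda>x y z. z))" for i
  define G2 where "G2 i = (if i \<le> n2 then e2 i else (\<lambda>x y z. z))" for i
  define N where "N = max n1 n2"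
  define mu :: "bool \<Rightarrow> bool \<Rightarrow> bool \<Rightarrow> nat" where "mu = (\<lambda>a b c. if b = c then 0 else 2)"
  define z0 :: "bool \<Rightarrow> bool \<Rightarrow> bool \<Rightarrow> nat" where "z0 = (\<lambda>a b c. 0)"
  define z2 :: "bool \<Rightarrow> bool \<Rightarrow> bool \<Rightarrow> nat" where "z2 = (\<lambda>a b c. 2)"
  define d where "d i = comb (D1 i) (D2 i) z0" for i
  define e where "e i = comb (G1 i) (G2 i) z2" for i
  define p where "p = comb p1 p2 mu"
  have td1: "tpol (dg V1 E1) (D1 i)" for i using t1' by (simp add: D1_def)
  have td2: "tpol (dg V2 E2) (D2 i)" for i using t2' by (simp add: D2_def)
  have te1: "tpol (dg V1 E1) (G1 i)" for i using t1' by (cases "i \<le> n1") (auto simp: G1_def tpol_def dg_def)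
  have te2: "tpol (dg V2 E2) (G2 i)" for i using t2' by (cases "i \<le> n2") (auto simp: G2_def tpol_def dg_def)
  have F1: "D1 i a a a = a" "G1 i a a a = a" "p1 a a a = a"
    "D1 0 a b c = a" "G1 N a b c = c"
    "even i \<Longrightarrow> D1 i a b b = D1 (Suc i) a b b" "even i \<Longrightarrow> G1 i a b b = G1 (Suc i) a b b"
    "odd i \<Longrightarrow> D1 i a a b = D1 (Suc i) a a b" "odd i \<Longrightarrow> G1 i a a b = G1 (Suc i) a a b"
    "D1 N a b b = p1 a b b" "p1 a a b = G1 0 a a b"
    "odd i \<Longrightarrow> D1 i a b a = D1 (Suc i) a b a" "even i \<Longrightarrow> G1 i a b a = G1 (Suc i) a b a"
    "D1 (Suc N) a b b = p1 a b b" "G1 (Suc N) a b c = c"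
    if "a \<in> V1" "b \<in> V1" "c \<in> V1" for a b c i
  proof -
    have I: "\<forall>i\<le>n1. d1 i a a a = a \<and> e1 i a a a = a" "p1 a a a = a" using id1 that by blast+
    have E: "d1 0 a b c = a" "e1 n1 a b c = c" "e1 n1 a b b = b" "e1 n1 a a b = b" "e1 n1 a b a = a"
      "\<forall>i<n1. even i \<longrightarrow> d1 i a b b = d1 (Suc i) a b b \<and> e1 i a b b = e1 (Suc i) a b b"
      "\<forall>i<n1. odd i \<longrightarrow> d1 i a a b = d1 (Suc i) a a b \<and> e1 i a a b = e1 (Suc i) a a b"
      "d1 n1 a b b = p1 a b b" "p1 a a b = e1 0 a a b"
      "\<forall>i<n1. odd i \<longrightarrow> d1 i a b a = d1 (Suc i) a b a"
      "\<forall>j<n1. even j \<longrightarrow> e1 j a b a = e1 (Suc j) a b a"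
      using q1 that by blast+
    have mN: "min N n1 = n1" "min (Suc N) n1 = n1" "\<not> Suc N \<le> n1" by (auto simp: N_def)
    show "D1 i a a a = a" using I(1) by (simp add: D1_def)
    show "G1 i a a a = a" using I(1) by (simp add: G1_def)
    show "p1 a a a = a" by (rule I(2))
    show "D1 0 a b c = a" using E(1) by (simp add: D1_def)
    show "G1 N a b c = c" "G1 (Suc N) a b c = c"
      using E(2) by (auto simp: G1_def N_def)
    show "D1 N a b b = p1 a b b" "D1 (Suc N) a b b = p1 a b b"
      using E(8) mN by (simp_all add: D1_def)
    show "p1 a a b = G1 0 a a b" using E(9) by (simp add: G1_def)
    show "D1 i a b b = D1 (Suc i) a b b" if "even i"
    proof (cases "i < n1")
      case True
      then have "d1 i a b b = d1 (Suc i) a b b" using E(6) that by blast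
      then show ?thesis using True by (simp add: D1_def min_def)
    qed (simp add: D1_def min_def)
    show "D1 i a a b = D1 (Suc i) a a b" if "odd i"
    proof (cases "i < n1")
      case True
      then have "d1 i a a b = d1 (Suc i) a a b" using E(7) that by blast
      then show ?thesis using True by (simp add: D1_def min_def)
    qed (simp add: D1_def min_def)
    show "D1 i a b a = D1 (Suc i) a b a" if "odd i"
    proof (cases "i < n1")
      case True
      then have "d1 i a b a = d1 (Suc i) a b a" using E(10) that by blast
      then show ?thesis using True by (simp add: D1_def min_def)
    qed (simp add: D1_def min_def)
    show "G1 i a b b = G1 (Suc i) a b b" if "even i"
    proof (cases "i < n1")
      case True
      then have "e1 i a b b = e1 (Suc i) a b b" using E(6) that by blast
      then show ?thesis using True by (simp add: G1_def)
    next
      case False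
      then show ?thesis using E(3) by (cases "i = n1") (simp_all add: G1_def)
    qed
    show "G1 i a a b = G1 (Suc i) a a b" if "odd i"
    proof (cases "i < n1")
      case True
      then have "e1 i a a b = e1 (Suc i) a a b" using E(7) that by blast
      then show ?thesis using True by (simp add: G1_def)
    next
      case False
      then show ?thesis using E(4) by (cases "i = n1") (simp_all add: G1_def)
    qed
    show "G1 i a b a = G1 (Suc i) a b a" if "even i"
    proof (cases "i < n1")
      case True
      then have "e1 i a b a = e1 (Suc i) a b a" using E(11) that by blast
      then show ?thesis using True by (simp add: G1_def)
    next
      case False
      then show ?thesis using E(5) by (cases "i = n1") (simp_all add: G1_def)
    qed
  qed
  have F2: "D2 i a a a = a" "G2 i a a a = a" "p2 a a a = a"
    "D2 0 a b c = a" "G2 N a b c = c"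
    "even i \<Longrightarrow> D2 i a b b = D2 (Suc i) a b b" "even i \<Longrightarrow> G2 i a b b = G2 (Suc i) a b b"
    "odd i \<Longrightarrow> D2 i a a b = D2 (Suc i) a a b" "odd i \<Longrightarrow> G2 i a a b = G2 (Suc i) a a b"
    "D2 N a b b = p2 a b b" "p2 a a b = G2 0 a a b"
    "odd i \<Longrightarrow> D2 i a b a = D2 (Suc i) a b a" "even i \<Longrightarrow> G2 i a b a = G2 (Suc i) a b a"
    "D2 (Suc N) a b b = p2 a b b" "G2 (Suc N) a b c = c"
    if "a \<in> V2" "b \<in> V2" "c \<in> V2" for a b c i
  proof -
    have I: "\<forall>i\<le>n2. d2 i a a a = a \<and> e2 i a a a = a" "p2 a a a = a" using id2 that by blast+
    have E: "d2 0 a b c = a" "e2 n2 a b c = c" "e2 n2 a b b = b" "e2 n2 a a b = b" "e2 n2 a b a = a"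
      "\<forall>i<n2. even i \<longrightarrow> d2 i a b b = d2 (Suc i) a b b \<and> e2 i a b b = e2 (Suc i) a b b"
      "\<forall>i<n2. odd i \<longrightarrow> d2 i a a b = d2 (Suc i) a a b \<and> e2 i a a b = e2 (Suc i) a a b"
      "d2 n2 a b b = p2 a b b" "p2 a a b = e2 0 a a b"
      "\<forall>i<n2. odd i \<longrightarrow> d2 i a b a = d2 (Suc i) a b a"
      "\<forall>j<n2. even j \<longrightarrow> e2 j a b a = e2 (Suc j) a b a"
      using q2 that by blast+
    have mN: "min N n2 = n2" "min (Suc N) n2 = n2" "\<not> Suc N \<le> n2" by (auto simp: N_def)
    show "D2 i a a a = a" using I(1) by (simp add: D2_def)
    show "G2 i a a a = a" using I(1) by (simp add: G2_def)
    show "p2 a a a = a" by (rule I(2))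
    show "D2 0 a b c = a" using E(1) by (simp add: D2_def)
    show "G2 N a b c = c" "G2 (Suc N) a b c = c"
      using E(2) by (auto simp: G2_def N_def)
    show "D2 N a b b = p2 a b b" "D2 (Suc N) a b b = p2 a b b"
      using E(8) mN by (simp_all add: D2_def)
    show "p2 a a b = G2 0 a a b" using E(9) by (simp add: G2_def)
    show "D2 i a b b = D2 (Suc i) a b b" if "even i"
    proof (cases "i < n2")
      case True
      then have "d2 i a b b = d2 (Suc i) a b b" using E(6) that by blast
      then show ?thesis using True by (simp add: D2_def min_def)
    qed (simp add: D2_def min_def)
    show "D2 i a a b = D2 (Suc i) a a b" if "odd i"
    proof (cases "i < n2")
      case True
      then have "d2 i a a b = d2 (Suc i) a a b" using E(7) that by blast
      then show ?thesis using True by (simp add: D2_def min_def)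
    qed (simp add: D2_def min_def)
    show "D2 i a b a = D2 (Suc i) a b a" if "odd i"
    proof (cases "i < n2")
      case True
      then have "d2 i a b a = d2 (Suc i) a b a" using E(10) that by blast
      then show ?thesis using True by (simp add: D2_def min_def)
    qed (simp add: D2_def min_def)
    show "G2 i a b b = G2 (Suc i) a b b" if "even i"
    proof (cases "i < n2")
      case True
      then have "e2 i a b b = e2 (Suc i) a b b" using E(6) that by blast
      then show ?thesis using True by (simp add: G2_def)
    next
      case False
      then show ?thesis using E(3) by (cases "i = n2") (simp_all add: G2_def)
    qed
    show "G2 i a a b = G2 (Suc i) a a b" if "odd i"
    proof (cases "i < n2")
      case True
      then have "e2 i a a b = e2 (Suc i) a a b" using E(7) that by blast
      then show ?thesis using True by (simp add: G2_def)
    next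
      case False
      then show ?thesis using E(4) by (cases "i = n2") (simp_all add: G2_def)
    qed
    show "G2 i a b a = G2 (Suc i) a b a" if "even i"
    proof (cases "i < n2")
      case True
      then have "e2 i a b a = e2 (Suc i) a b a" using E(11) that by blast
      then show ?thesis using True by (simp add: G2_def)
    next
      case False
      then show ?thesis using E(5) by (cases "i = n2") (simp_all add: G2_def)
    qed
  qed
  have idem: "(\<forall>i\<le>N. d i x x x = x \<and> e i x x x = x) \<and> p x x x = x"
    if "x \<in> Inl ` V1 \<union> Inr ` V2" for x
    using that
    apply (elim UnE imageE)
    apply (simp_all add: d_def e_def p_def F1(1,2,3) F2(1,2,3))
    done
  have eqs: "d 0 x y z = x \<and> e N x y z = z \<and>
        (\<forall>i<N. even i \<longrightarrow> d i x y y = d (Suc i) x y y \<and> e i x y y = e (Suc i) x y y) \<and>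
        (\<forall>i<N. odd i \<longrightarrow> d i x x y = d (Suc i) x x y \<and> e i x x y = e (Suc i) x x y) \<and>
        d N x y y = p x y y \<and> p x x y = e 0 x x y \<and>
        (\<forall>i<N. odd i \<longrightarrow> d i x y x = d (Suc i) x y x) \<and>
        (\<forall>j<N. even j \<longrightarrow> e j x y x = e (Suc j) x y x)"
    if "x \<in> Inl ` V1 \<union> Inr ` V2" "y \<in> Inl ` V1 \<union> Inr ` V2" "z \<in> Inl ` V1 \<union> Inr ` V2" for x y z
    using that
    apply (elim UnE imageE)
    apply (simp_all add: d_def e_def p_def F1(1,2,3,4,5,10,11,14,15) F2(1,2,3,4,5,10,11,14,15) comb_mixed sel_def mu_def z0_def z2_def)
    apply (intro conjI allI impI; (rule F1(6,7,8,9,12,13) F2(6,7,8,9,12,13); assumption))+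
    done
  have T: "\<forall>i\<le>N. tpol (dunion V1 E1 V2 E2) (d i) \<and> tpol (dunion V1 E1 V2 E2) (e i)"
    "\<forall>i\<le>N. tpol (dunion_marked V1 E1 V2 E2) (d i) \<and> tpol (dunion_marked V1 E1 V2 E2) (e i)"
    "tpol (dunion V1 E1 V2 E2) p" "tpol (dunion_marked V1 E1 V2 E2) p"
    using tpol_comb[OF td1 td2] tpol_comb[OF te1 te2] tpol_comb[OF p1t p2t]
    by (simp_all add: d_def e_def p_def)
  show ?thesis
    unfolding hobby_mckenzie_def carrier_du
    apply (rule conjI)
    apply (rule exI[of _ N], rule exI[of _ d], rule exI[of _ p], rule exI[of _ e], intro conjI)
    apply (rule T(1))
    apply (rule T(3))
    apply (intro ballI, erule idem)
    apply (intro ballI, rule eqs; assumption)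
    apply (rule exI[of _ N], rule exI[of _ d], rule exI[of _ p], rule exI[of _ e], intro conjI)
    apply (rule T(2))
    apply (rule T(4))
    apply (intro ballI, erule idem)
    apply (intro ballI, rule eqs; assumption)
    done
qed

theorem lemma4p2:
  fixes V1 :: "'a set" and E1 :: "('a \<times> 'a) set"
    and V2 :: "'b set" and E2 :: "('b \<times> 'b) set"
  assumes "digraph V1 E1" and "digraph V2 E2"
  shows "(cong_permutable (dg V1 E1) \<and> cong_permutable (dg V2 E2) \<longrightarrow>
            cong_permutable (dunion V1 E1 V2 E2) \<and> cong_permutable (dunion_marked V1 E1 V2 E2)) \<and>
         (cong_modular (dg V1 E1) \<and> cong_modular (dg V2 E2) \<longrightarrow>
            cong_modular (dunion V1 E1 V2 E2) \<and> cong_modular (dunion_marked V1 E1 V2 E2)) \<and>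
         (hobby_mckenzie (dg V1 E1) \<and> hobby_mckenzie (dg V2 E2) \<longrightarrow>
            hobby_mckenzie (dunion V1 E1 V2 E2) \<and> hobby_mckenzie (dunion_marked V1 E1 V2 E2))"
  using perm_union[of _ V1 E1 _ V2 E2] mod_union[of V1 E1 V2 E2] hm_union[of V1 E1 V2 E2]
  unfolding cong_permutable_def by blast

end
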